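(* Let $a>0$ and $f\in\mathcal{F}(\mathbb{L}_a)$. Let $g:\mathbb{R}_{\ge0}\to\mathbb{R}$ satisfy: (1) $g$ is $a$-periodic; (2) $g(0)>0$; (3) the even extension of $g$ to $\mathbb{R}$ has an $a$-periodic Fourier series $S_N(\xi)=\sum_{k=0}^N a_k\cos(2\pi k\xi/a)$ with all coefficients $a_k\ge0$; (4) $S_N(\xi)\to g(\xi)$ for every $\xi$. Then $|g|\,f\in\mathcal{F}(\mathbb{L}_a)$.
   Context: $\mathbb{L}=\{x\in\mathbb{R}\setminus\mathbb{Q}:\ \forall n\in\mathbb{N}\ \exists q\in\mathbb{N}\text{ with }\|qx\|<q^{-n}\}$ is the set of Liouville numbers, where $\|x\|=\min_{m\in\mathbb{Z}}|x-m|$, and for $a>0$, $\mathbb{L}_a=\mathbb{L}+\frac1a\mathbb{Z}=\{x+m/a: x\in\mathbb{L},m\in\mathbb{Z}\}$. For a finite Borel measure $\mu$ on $\mathbb{R}$, $\hat\mu(\xi)=\int e^{-2\pi i x\xi}\,d\mu(x)$. For a Borel set $E\subset\mathbb{R}$, $\mathcal{P}(E)$ denotes the Borel probability measures $\mu$ on $\mathbb{R}$ with $\mu(\mathbb{R}\setminus E)=0$. For a function $f$ with values in $\mathbb{R}_{\ge0}$ defined at least on $[M_0,\infty)$ for some $M_0$, we write $f\in\mathcal{F}(E)$ if there exist $\mu\in\mathcal{P}(E)$ and constants $c,M>0$ such that $|\hat\mu(\xi)|\le c\,f(|\xi|)$ for all $\xi\in\mathbb{R}$ with $|\xi|\ge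 M$. *)

theory Defs
  imports "HOL-Probability.Probability"
begin

definition dist_int :: "real \<Rightarrow> real" where
  "dist_int x = (INF m\<in>(\<int>::real set). \<bar>x - m\<bar>)"

definition liouville :: "real set" where
  "liouville = {x. x \<notin> \<rat> \<and>
     (\<forall>n::nat. \<exists>q::nat. q > 0 \<and> dist_int (real q * x) < 1 / (real q) ^ n)}"

definition liouville_shift :: "real \<Rightarrow> real set" where
  "liouville_shift a = {x + real_of_int m / a | x m. x \<in> liouville}"

definition fourier_measure :: "real measure \<Rightarrow> real \<Rightarrow> complex" where
  "fourier_measure \<mu> \<xi> = integral\<^sup>L \<mu> (\<lambda>x. cis (- 2 * pi * x * \<xi>))"

definition prob_on :: "real set \<Rightarrow> real measure set" where
  "prob_on E = {\<mu>. prob_space \<mu> \<and> sets \<mu> = sets borel \<and>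
                   (UNIV - E) \<in> sets \<mu> \<and> emeasure \<mu> (UNIV - E) = 0}"

definition decay_class :: "real set \<Rightarrow> (real \<Rightarrow> real) set" where
  "decay_class E = {f. (\<exists>M0. \<forall>x\<ge>M0. f x \<ge> 0) \<and>
     (\<exists>\<mu> c M. \<mu> \<in> prob_on E \<and> c > 0 \<and> M > 0 \<and>
        (\<forall>\<xi>. \<bar>\<xi>\<bar> \<ge> M \<longrightarrow> norm (fourier_measure \<mu> \<xi>) \<le> c * f \<bar>\<xi>\<bar>))}"

definition cos_coeff :: "real \<Rightarrow> (real \<Rightarrow> real) \<Rightarrow> nat \<Rightarrow> real" where
  "cos_coeff a h k = (if k = 0 then 1 / a else 2 / a) *
      integral {-a/2..a/2} (\<lambda>x. h x * cos (2 * pi * real k * x / a))"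

end

theory Submission
  imports Defs
begin

lemma fubini_bounded:
  fixes h :: "'a \<times> 'b \<Rightarrow> complex"
  assumes "prob_space M" "prob_space N" "h \<in> borel_measurable (M \<Otimes>\<^sub>M N)" "\<And>z. norm (h z) \<le> 1"
  shows "integral\<^sup>L (M \<Otimes>\<^sub>M N) h = (\<integral>x. (\<integral>y. h (x,y) \<partial>N) \<partial>M)"
proof -
  interpret pair_prob_space M N
    using assms by (simp add: pair_prob_space_def pair_sigma_finite_def prob_space_imp_sigma_finite)
  have "integrable (M \<Otimes>\<^sub>M N) h"
    by (rule integrable_const_bound[where B=1]) (use assms in auto)
  then show ?thesis by (rule integral_fst'[symmetric])
qed

lemma prod_mult_integral:
  fixes f :: "'a \<Rightarrow> complex" and g :: "'b \<Rightarrow> complex"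
  assumes "prob_space M" "prob_space N" "f \<in> borel_measurable M" "g \<in> borel_measurable N"
    "\<And>x. norm (f x) \<le> 1" "\<And>y. norm (g y) \<le> 1"
  shows "integral\<^sup>L (M \<Otimes>\<^sub>M N) (\<lambda>z. f (fst z) * g (snd z)) = integral\<^sup>L M f * integral\<^sup>L N g"
proof -
  have m: "(\<lambda>z. f (fst z) * g (snd z)) \<in> borel_measurable (M \<Otimes>\<^sub>M N)"
    using assms(3,4) by measurable
  have "integral\<^sup>L (M \<Otimes>\<^sub>M N) (\<lambda>z. f (fst z) * g (snd z)) = (\<integral>x. (\<integral>y. f x * g y \<partial>N) \<partial>M)"
    by (subst fubini_bounded[OF assms(1,2) m]) (auto simp: norm_mult intro: mult_le_one assms)
  also have "\<dots> = (\<integral>x. f x * integral\<^sup>L N g \<partial>M)" by simp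
  also have "\<dots> = integral\<^sup>L M f * integral\<^sup>L N g" by simp
  finally show ?thesis .
qed

lemma hatP:
  fixes p :: "nat \<Rightarrow> real" and \<theta> :: real
  assumes nn: "\<And>k. 0 \<le> p k" and ps: "p sums 1"
  shows "integral\<^sup>L (measure_pmf (embed_pmf p) \<Otimes>\<^sub>M measure_pmf (bernoulli_pmf (1/2)))
           (\<lambda>y. cis (- \<theta> * (if snd y then real (fst y) else - real (fst y))))
         = complex_of_real (\<Sum>k. p k * cos (\<theta> * real k))"
proof -
  have prob: "(\<integral>\<^sup>+x. ennreal (p x) \<partial>count_space UNIV) = 1"
    using ps nn by (simp add: nn_integral_count_space_nat suminf_ennreal2 sums_iff)
  have pmfW: "pmf (embed_pmf p) k = p k" for k by (rule pmf_embed_pmf[OF nn prob])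
  let ?W = "measure_pmf (embed_pmf p)"
  let ?C = "measure_pmf (bernoulli_pmf (1/2))"
  have m: "(\<lambda>y. cis (- \<theta> * (if snd y then real (fst y) else - real (fst y)))) \<in> borel_measurable (?W \<Otimes>\<^sub>M ?C)"
    by measurable
  have "integral\<^sup>L (?W \<Otimes>\<^sub>M ?C) (\<lambda>y. cis (- \<theta> * (if snd y then real (fst y) else - real (fst y))))
      = (\<integral>k. (\<integral>b. cis (- \<theta> * (if b then real k else - real k)) \<partial>?C) \<partial>?W)"
    using fubini_bounded[OF _ _ m] by (simp only: fst_conv snd_conv measure_pmf.prob_space_axioms norm_cis)
  also have "\<dots> = (\<integral>k. complex_of_real (cos (\<theta> * real k)) \<partial>?W)"
  proof (rule Bochner_Integration.integral_cong[OF refl])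
    fix k
    show "(\<integral>b. cis (- \<theta> * (if b then real k else - real k)) \<partial>?C) = complex_of_real (cos (\<theta> * real k))"
      by (subst integral_measure_pmf[of UNIV]) (simp_all add: UNIV_bool complex_eq_iff cos_minus sin_minus scaleR_conv_of_real)
  qed
  also have "\<dots> = complex_of_real (\<integral>k. cos (\<theta> * real k) \<partial>?W)"
    by simp
  also have "(\<integral>k. cos (\<theta> * real k) \<partial>?W) = (\<integral>k. p k * cos (\<theta> * real k) \<partial>count_space UNIV)"
    unfolding measure_pmf_eq_density by (subst integral_density) (auto simp: pmfW nn)
  also have "\<dots> = (\<Sum>k. p k * cos (\<theta> * real k))"
  proof (rule integral_count_space_nat)
    have "summable (\<lambda>k. norm (p k * cos (\<theta> * real k)))"
    proof (rule summable_comparison_test)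
      show "\<exists>N. \<forall>n\<ge>N. norm (norm (p n * cos (\<theta> * real n))) \<le> p n"
        using nn by (auto simp: abs_mult intro!: mult_left_le)
      show "summable p" using ps by (simp add: sums_iff)
    qed
    then show "integrable (count_space UNIV) (\<lambda>k. p k * cos (\<theta> * real k))"
      by (simp add: integrable_count_space_nat_iff)
  qed
  finally show ?thesis .
qed

lemma shift_closed:
  assumes "x \<in> liouville_shift a"
  shows "x + real_of_int j / a \<in> liouville_shift a"
proof -
  from assms obtain l m where l: "l \<in> liouville" and x: "x = l + real_of_int m / a"
    unfolding liouville_shift_def by blast
  have "x + real_of_int j / a = l + real_of_int (m + j) / a"
    by (simp add: x add_divide_distrib)
  then show ?thesis using l unfolding liouville_shift_def by blast
qed

theorem proposition3p3:
  fixes a :: real and f g :: "real \<Rightarrow> real"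
  assumes a_pos: "a > 0"
    and f_in: "f \<in> decay_class (liouville_shift a)"
    and g_periodic: "\<forall>x\<ge>0. g (x + a) = g x"
    and g0: "g 0 > 0"
    and g_integrable: "(\<lambda>x. g \<bar>x\<bar>) absolutely_integrable_on {-a/2..a/2}"
    and coeff_nonneg: "\<forall>k. cos_coeff a (\<lambda>x. g \<bar>x\<bar>) k \<ge> 0"
    and series_conv: "\<forall>\<xi>. (\<lambda>N. \<Sum>k\<le>N. cos_coeff a (\<lambda>x. g \<bar>x\<bar>) k * cos (2 * pi * real k * \<xi> / a))
                          \<longlonglongrightarrow> g \<bar>\<xi>\<bar>"
  shows "(\<lambda>\<xi>. \<bar>g \<xi>\<bar> * f \<xi>) \<in> decay_class (liouville_shift a)"
proof -
  let ?E = "liouville_shift a"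
  from f_in obtain M0 \<mu> c M where M0: "\<forall>x\<ge>M0. f x \<ge> 0" and \<mu>: "\<mu> \<in> prob_on ?E"
    and c: "c > 0" "M > 0"
    and bound: "\<forall>\<xi>. \<bar>\<xi>\<bar> \<ge> M \<longrightarrow> norm (fourier_measure \<mu> \<xi>) \<le> c * f \<bar>\<xi>\<bar>"
    unfolding decay_class_def by blast
  from \<mu> have \<mu>p: "prob_space \<mu>" and \<mu>s: "sets \<mu> = sets borel" and Ec: "UNIV - ?E \<in> sets \<mu>"
    and Enull: "emeasure \<mu> (UNIV - ?E) = 0"
    unfolding prob_on_def by auto
  have space\<mu>: "space \<mu> = UNIV" using sets_eq_imp_space_eq[OF \<mu>s] by simp
  define cc where "cc k = cos_coeff a (\<lambda>x. g \<bar>x\<bar>) k" for k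
  have ccs: "cc sums g 0" using series_conv[rule_format, of 0] by (simp add: sums_def_le cc_def)
  define p where "p k = cc k / g 0" for k
  have pn: "\<And>k. 0 \<le> p k" using coeff_nonneg g0 by (simp add: p_def cc_def)
  have ps: "p sums 1" using sums_divide[OF ccs, of "g 0"] g0 by (simp add: p_def[abs_def])
  define P where "P = measure_pmf (embed_pmf p) \<Otimes>\<^sub>M measure_pmf (bernoulli_pmf (1/2))"
  define s where "s y = (if snd y then real (fst y) else - real (fst y)) / a" for y :: "nat \<times> bool"
  define \<nu> where "\<nu> = distr (\<mu> \<Otimes>\<^sub>M P) borel (\<lambda>z. fst z + s (snd z))"
  have Pp: "prob_space P" unfolding P_def
    by (intro prob_space_pair) (auto simp: measure_pmf.prob_space_axioms)
  interpret PP: pair_prob_space \<mu> P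
    using \<mu>p Pp by (simp add: pair_prob_space_def pair_sigma_finite_def prob_space_imp_sigma_finite)
  have sets_eq: "sets (\<mu> \<Otimes>\<^sub>M P) = sets (borel \<Otimes>\<^sub>M P)" by (rule sets_pair_measure_cong[OF \<mu>s refl])
  have ms[measurable]: "s \<in> borel_measurable P" unfolding s_def P_def by measurable
  have mz: "(\<lambda>z. fst z + s (snd z)) \<in> borel_measurable (\<mu> \<Otimes>\<^sub>M P)"
    unfolding measurable_cong_sets[OF sets_eq refl] by measurable
  have \<nu>p: "prob_space \<nu>" unfolding \<nu>_def by (rule PP.prob_space_distr[OF mz])
  have \<nu>s: "sets \<nu> = sets borel" by (simp add: \<nu>_def)
  have nE: "- ?E \<in> sets borel" using Ec \<mu>s by (metis Compl_eq_Diff_UNIV)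
  then have Eb: "?E \<in> sets borel" using borel_comp[OF nE] by simp
  have Ecb: "UNIV - ?E \<in> sets borel" using Ec \<mu>s by simp
  have AE\<mu>: "AE x in \<mu>. x \<in> ?E"
  proof -
    have "{x \<in> space \<mu>. x \<notin> ?E} = UNIV - ?E" using space\<mu> by (intro set_eqI iffI) simp_all
    then show ?thesis using AE_iff_measurable[OF Ec, of "\<lambda>x. x \<in> ?E"] Enull by simp
  qed
  have sint: "s y = real_of_int (if snd y then int (fst y) else - int (fst y)) / a" for y
    by (simp add: s_def)
  have AEP: "AE z in \<mu> \<Otimes>\<^sub>M P. fst z + s (snd z) \<in> ?E"
  proof (rule PP.AE_pair_measure)
    have "{x \<in> space (\<mu> \<Otimes>\<^sub>M P). fst x + s (snd x) \<in> ?E} = (\<lambda>z. fst z + s (snd z)) -` ?E \<inter> space (\<mu> \<Otimes>\<^sub>M P)"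
      by (intro set_eqI iffI) simp_all
    then show "{x \<in> space (\<mu> \<Otimes>\<^sub>M P). fst x + s (snd x) \<in> ?E} \<in> sets (\<mu> \<Otimes>\<^sub>M P)"
      using measurable_sets[OF mz Eb] by simp
    show "AE x in \<mu>. AE y in P. fst (x, y) + s (snd (x, y)) \<in> ?E"
      using AE\<mu>
    proof eventually_elim
      case (elim x)
      show ?case
      proof (rule AE_I2)
        fix y
        show "fst (x, y) + s (snd (x, y)) \<in> ?E"
          unfolding fst_conv snd_conv sint by (rule shift_closed[OF elim])
      qed
    qed
  qed
  have pre_sets: "(\<lambda>z. fst z + s (snd z)) -` (UNIV - ?E) \<inter> space (\<mu> \<Otimes>\<^sub>M P) \<in> sets (\<mu> \<Otimes>\<^sub>M P)"
    using measurable_sets[OF mz Ecb] .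
  have "emeasure (\<mu> \<Otimes>\<^sub>M P) ((\<lambda>z. fst z + s (snd z)) -` (UNIV - ?E) \<inter> space (\<mu> \<Otimes>\<^sub>M P)) = 0"
  proof -
    have "{z \<in> space (\<mu> \<Otimes>\<^sub>M P). \<not> (fst z + s (snd z) \<in> ?E)} = (\<lambda>z. fst z + s (snd z)) -` (UNIV - ?E) \<inter> space (\<mu> \<Otimes>\<^sub>M P)"
      by (intro set_eqI iffI) simp_all
    from AE_iff_measurable[OF pre_sets this] AEP show ?thesis by simp
  qed
  then have \<nu>null: "emeasure \<nu> (UNIV - ?E) = 0"
    unfolding \<nu>_def by (subst emeasure_distr[OF mz Ecb])
  have \<nu>prob: "\<nu> \<in> prob_on ?E"
    unfolding prob_on_def using \<nu>p \<nu>s Ecb \<nu>null by simp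
  have four: "fourier_measure \<nu> \<xi> = fourier_measure \<mu> \<xi> * complex_of_real (g \<bar>\<xi>\<bar> / g 0)" for \<xi>
  proof -
    have mc: "(\<lambda>x::real. cis (- 2 * pi * x * \<xi>)) \<in> borel_measurable borel"
      by (intro borel_measurable_continuous_onI continuous_intros)
    have mc\<mu>: "(\<lambda>x::real. cis (- 2 * pi * x * \<xi>)) \<in> borel_measurable \<mu>"
      unfolding measurable_cong_sets[OF \<mu>s refl] by (rule mc)
    have mcP: "(\<lambda>y. cis (- 2 * pi * s y * \<xi>)) \<in> borel_measurable P"
      using measurable_compose[OF ms mc] by simp
    have "fourier_measure \<nu> \<xi> = (\<integral>z. cis (- 2 * pi * (fst z + s (snd z)) * \<xi>) \<partial>(\<mu> \<Otimes>\<^sub>M P))"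
      unfolding fourier_measure_def \<nu>_def by (subst integral_distr[OF mz mc]) simp
    also have "\<dots> = (\<integral>z. cis (- 2 * pi * fst z * \<xi>) * cis (- 2 * pi * s (snd z) * \<xi>) \<partial>(\<mu> \<Otimes>\<^sub>M P))"
      by (rule Bochner_Integration.integral_cong[OF refl]) (simp add: cis_mult algebra_simps)
    also have "\<dots> = fourier_measure \<mu> \<xi> * (\<integral>y. cis (- 2 * pi * s y * \<xi>) \<partial>P)"
      unfolding fourier_measure_def
      by (rule prod_mult_integral[OF \<mu>p Pp mc\<mu> mcP]) auto
    also have "(\<integral>y. cis (- 2 * pi * s y * \<xi>) \<partial>P) = 
        (\<integral>y. cis (- (2 * pi * \<xi> / a) * (if snd y then real (fst y) else - real (fst y))) \<partial>P)"
      using a_pos by (intro Bochner_Integration.integral_cong[OF refl] arg_cong[where f=cis]) (simp add: s_def)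
    also have "\<dots> = complex_of_real (\<Sum>k. p k * cos ((2 * pi * \<xi> / a) * real k))"
      unfolding P_def by (rule hatP[OF pn ps])
    also have "(\<Sum>k. p k * cos ((2 * pi * \<xi> / a) * real k)) = g \<bar>\<xi>\<bar> / g 0"
    proof -
      have "(\<lambda>k. cc k * cos (2 * pi * real k * \<xi> / a)) sums g \<bar>\<xi>\<bar>"
        using series_conv[rule_format, of \<xi>] by (simp add: sums_def_le cc_def)
      from sums_divide[OF this, of "g 0"]
      have "(\<lambda>k. p k * cos ((2 * pi * \<xi> / a) * real k)) sums (g \<bar>\<xi>\<bar> / g 0)"
        by (simp add: p_def mult_ac)
      then show ?thesis by (rule sums_unique[symmetric])
    qed
    finally show ?thesis .
  qed
  have bnd: "norm (fourier_measure \<nu> \<xi>) \<le> (c / g 0) * (\<bar>g \<bar>\<xi>\<bar>\<bar> * f \<bar>\<xi>\<bar>)" if "\<bar>\<xi>\<bar> \<ge> M" for \<xi>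
  proof -
    have "norm (fourier_measure \<nu> \<xi>) = norm (fourier_measure \<mu> \<xi>) * (\<bar>g \<bar>\<xi>\<bar>\<bar> / g 0)"
      using g0 by (simp add: four norm_mult norm_divide)
    also have "\<dots> \<le> (c * f \<bar>\<xi>\<bar>) * (\<bar>g \<bar>\<xi>\<bar>\<bar> / g 0)"
      using bound that g0 by (intro mult_right_mono) auto
    also have "\<dots> = (c / g 0) * (\<bar>g \<bar>\<xi>\<bar>\<bar> * f \<bar>\<xi>\<bar>)" by simp
    finally show ?thesis .
  qed
  show ?thesis
    unfolding decay_class_def
  proof (intro CollectI conjI exI)
    show "\<forall>x\<ge>M0. 0 \<le> \<bar>g x\<bar> * f x" using M0 by simp
    show "\<forall>\<xi>. M \<le> \<bar>\<xi>\<bar> \<longrightarrow> norm (fourier_measure \<nu> \<xi>) \<le> c / g 0 * (\<bar>g \<bar>\<xi>\<bar>\<bar> * f \<bar>\<xi>\<bar>)"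
      using bnd by blast
  qed (use \<nu>prob c g0 in auto)
qed

end
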